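(* Let $(X,\alpha,T)$ be a dynamical system with $T=\mathbb{Z}$ or $T=\mathbb{R}$ acting by homeomorphisms on a compact metrizable space $X$. Then $\mathcal M=\mathcal M^+\cup\mathcal M^-$, and $\mathcal M^+$ and $\mathcal M^-$ are left ideals of $E$.
   Context: $\alpha^t$ are homeomorphisms with $\alpha^{s+t}=\alpha^s\circ\alpha^t$, $\alpha^0=\mathrm{id}$. $E$ is the closure of $\{\alpha^t:t\in T\}$ in $X^X$ (pointwise convergence topology, composition), $E^+$ and $E^-$ the closures of $\{\alpha^t: t\ge0\}$ and $\{\alpha^t:t\le0\}$. $\mathcal M$, $\mathcal M^+$, $\mathcal M^-$ denote the kernels (unique minimal two-sided ideals) of $E$, $E^+$, $E^-$. A left ideal of $S$ is a non-empty $I\subset S$ with $SI\subset I$. *)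

theory Defs
  imports "HOL-Analysis.Analysis"
begin

text \<open>The time group T is a type 't (instantiated below with int and real).
  The flow is alpha :: 't => 'x => 'x; X is the whole type 'x.
  X^X carries the product (pointwise convergence) topology, which is the
  library's topology on function types (Function_Topology).\<close>

definition dyn_system :: "('t::{topological_space, ab_group_add} \<Rightarrow> 'x::topological_space \<Rightarrow> 'x) \<Rightarrow> bool" where
  "dyn_system \<alpha> \<longleftrightarrow>
     (\<forall>t. \<exists>g. homeomorphism UNIV UNIV (\<alpha> t) g) \<and>
     (\<forall>s t. \<alpha> (s + t) = \<alpha> s \<circ> \<alpha> t) \<and>
     \<alpha> 0 = id \<and>
     continuous_on UNIV (\<lambda>(t, x). \<alpha> t x)"

definition env :: "('t \<Rightarrow> 'x \<Rightarrow> 'x::topological_space) \<Rightarrow> ('x \<Rightarrow> 'x) set" where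
  "env \<alpha> = closure (range \<alpha>)"

definition env_plus :: "('t::{ord,zero} \<Rightarrow> 'x \<Rightarrow> 'x::topological_space) \<Rightarrow> ('x \<Rightarrow> 'x) set" where
  "env_plus \<alpha> = closure (\<alpha> ` {t. 0 \<le> t})"

definition env_minus :: "('t::{ord,zero} \<Rightarrow> 'x \<Rightarrow> 'x::topological_space) \<Rightarrow> ('x \<Rightarrow> 'x) set" where
  "env_minus \<alpha> = closure (\<alpha> ` {t. t \<le> 0})"

definition left_ideal :: "('x \<Rightarrow> 'x) set \<Rightarrow> ('x \<Rightarrow> 'x) set \<Rightarrow> bool" where
  "left_ideal S I \<longleftrightarrow> I \<noteq> {} \<and> I \<subseteq> S \<and> (\<forall>p\<in>S. \<forall>q\<in>I. p \<circ> q \<in> I)"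

definition right_ideal :: "('x \<Rightarrow> 'x) set \<Rightarrow> ('x \<Rightarrow> 'x) set \<Rightarrow> bool" where
  "right_ideal S I \<longleftrightarrow> I \<noteq> {} \<and> I \<subseteq> S \<and> (\<forall>p\<in>S. \<forall>q\<in>I. q \<circ> p \<in> I)"

definition two_sided_ideal :: "('x \<Rightarrow> 'x) set \<Rightarrow> ('x \<Rightarrow> 'x) set \<Rightarrow> bool" where
  "two_sided_ideal S I \<longleftrightarrow> left_ideal S I \<and> right_ideal S I"

definition kernel_sg :: "('x \<Rightarrow> 'x) set \<Rightarrow> ('x \<Rightarrow> 'x) set" where
  "kernel_sg S = (THE K. two_sided_ideal S K \<and>
      (\<forall>J. two_sided_ideal S J \<and> J \<subseteq> K \<longrightarrow> J = K))"

end

theory Submission imports Defs begin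

lemma compact_fun_UNIV:
  assumes "compact (UNIV :: 'x::topological_space set)"
  shows "compact (UNIV :: ('a \<Rightarrow> 'x) set)"
proof -
  have "compact_space (euclidean :: 'x topology)"
    using assms by (simp add: compact_space_def)
  then have "compact_space (product_topology (\<lambda>i::'a. euclidean :: 'x topology) UNIV)"
    by (simp add: compact_space_product_topology)
  then show ?thesis
    by (simp add: euclidean_product_topology compact_space_def)
qed

lemma compact_fun_closed:
  fixes K :: "('a \<Rightarrow> 'x::metric_space) set"
  assumes "compact K"
  shows "closed K"
proof -
  have "Hausdorff_space (product_topology (\<lambda>i::'a. euclidean :: 'x topology) UNIV)"
    by (rule Hausdorff_space_product_topology[THEN iffD2], rule disjI2) (simp add: Hausdorff_space_euclidean)
  then have H: "Hausdorff_space (euclidean :: ('a \<Rightarrow> 'x) topology)"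
    by (simp add: euclidean_product_topology)
  show ?thesis
  proof -
    have "compactin euclidean K" using assms by simp
    then have "closedin euclidean K" by (rule compactin_imp_closedin[OF H])
    then show ?thesis by (simp only: closed_closedin)
  qed
qed

lemma cont_right:
  "continuous_on UNIV (\<lambda>p::'a \<Rightarrow> 'b::topological_space. p \<circ> q)"
  by (rule continuous_on_coordinatewise_then_product) (simp add: o_def)

lemma cont_left:
  assumes "continuous_on UNIV (f :: 'b::topological_space \<Rightarrow> 'b)"
  shows "continuous_on UNIV (\<lambda>p::'a \<Rightarrow> 'b. f \<circ> p)"
proof (rule continuous_on_coordinatewise_then_product)
  fix i
  show "continuous_on UNIV (\<lambda>p::'a \<Rightarrow> 'b. (f \<circ> p) i)"
    unfolding o_def
    by (rule continuous_on_compose2[OF assms continuous_on_product_coordinates]) auto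
qed


definition sg :: "('x \<Rightarrow> 'x) set \<Rightarrow> bool" where
  "sg S \<longleftrightarrow> (\<forall>p\<in>S. \<forall>q\<in>S. p \<circ> q \<in> S)"

definition minL :: "('x \<Rightarrow> 'x) set \<Rightarrow> ('x \<Rightarrow> 'x) set \<Rightarrow> bool" where
  "minL S L \<longleftrightarrow> left_ideal S L \<and> (\<forall>L'. left_ideal S L' \<and> L' \<subseteq> L \<longrightarrow> L' = L)"

lemma minL_gen:
  assumes "sg S" "minL S L" "q \<in> L"
  shows "(\<lambda>p. p \<circ> q) ` S = L"
proof -
  have LI: "left_ideal S L" and mn: "\<And>L'. left_ideal S L' \<Longrightarrow> L' \<subseteq> L \<Longrightarrow> L' = L"
    using assms(2) unfolding minL_def by auto
  have qS: "q \<in> S" using LI assms(3) unfolding left_ideal_def by auto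
  have "left_ideal S ((\<lambda>p. p \<circ> q) ` S)"
    unfolding left_ideal_def
  proof (intro conjI ballI)
    show "(\<lambda>p. p \<circ> q) ` S \<noteq> {}" using qS by auto
    show "(\<lambda>p. p \<circ> q) ` S \<subseteq> S" using assms(1) qS unfolding sg_def by auto
    fix p r assume "p \<in> S" "r \<in> (\<lambda>p. p \<circ> q) ` S"
    then obtain s where "s \<in> S" "r = s \<circ> q" by auto
    then have "p \<circ> r = (p \<circ> s) \<circ> q" by (simp add: o_assoc)
    moreover have "p \<circ> s \<in> S" using assms(1) \<open>p \<in> S\<close> \<open>s \<in> S\<close> unfolding sg_def by auto
    ultimately show "p \<circ> r \<in> (\<lambda>p. p \<circ> q) ` S" by auto
  qed
  moreover have "(\<lambda>p. p \<circ> q) ` S \<subseteq> L" using LI assms(3) unfolding left_ideal_def by auto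
  ultimately show ?thesis using mn by blast
qed

lemma minL_right:
  assumes "sg S" "minL S L" "q \<in> S"
  shows "minL S ((\<lambda>l. l \<circ> q) ` L)"
proof -
  have LI: "left_ideal S L" and mn: "\<And>L'. left_ideal S L' \<Longrightarrow> L' \<subseteq> L \<Longrightarrow> L' = L"
    using assms(2) unfolding minL_def by auto
  have LS: "L \<subseteq> S" using LI unfolding left_ideal_def by auto
  have LIq: "left_ideal S ((\<lambda>l. l \<circ> q) ` L)"
    unfolding left_ideal_def
  proof (intro conjI ballI)
    show "(\<lambda>l. l \<circ> q) ` L \<noteq> {}" using LI unfolding left_ideal_def by auto
    show "(\<lambda>l. l \<circ> q) ` L \<subseteq> S" using assms(1,3) LS unfolding sg_def by auto
    fix p r assume "p \<in> S" "r \<in> (\<lambda>l. l \<circ> q) ` L"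
    then obtain s where "s \<in> L" "r = s \<circ> q" by auto
    then have "p \<circ> r = (p \<circ> s) \<circ> q" by (simp add: o_assoc)
    moreover have "p \<circ> s \<in> L" using LI \<open>p \<in> S\<close> \<open>s \<in> L\<close> unfolding left_ideal_def by auto
    ultimately show "p \<circ> r \<in> (\<lambda>l. l \<circ> q) ` L" by auto
  qed
  have "L' = (\<lambda>l. l \<circ> q) ` L" if L': "left_ideal S L'" "L' \<subseteq> (\<lambda>l. l \<circ> q) ` L" for L'
  proof -
    define A where "A = {l \<in> L. l \<circ> q \<in> L'}"
    obtain y where "y \<in> L'" using L'(1) unfolding left_ideal_def by auto
    then obtain l where "l \<in> L" "y = l \<circ> q" using L'(2) by auto
    have "left_ideal S A"
      unfolding left_ideal_def
    proof (intro conjI ballI)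
      show "A \<noteq> {}" using \<open>l \<in> L\<close> \<open>y = l \<circ> q\<close> \<open>y \<in> L'\<close> A_def by auto
      show "A \<subseteq> S" using LS A_def by auto
      fix p r assume "p \<in> S" "r \<in> A"
      then have "p \<circ> r \<in> L" "p \<circ> (r \<circ> q) \<in> L'" using LI L'(1) unfolding A_def left_ideal_def by auto
      then show "p \<circ> r \<in> A" unfolding A_def by (simp add: o_assoc)
    qed
    then have "A = L" using mn A_def by auto
    then have "(\<lambda>l. l \<circ> q) ` L \<subseteq> L'" using A_def by auto
    then show ?thesis using L'(2) by auto
  qed
  then show ?thesis using LIq unfolding minL_def by auto
qed

lemma kernel_eq:
  assumes "sg S" "\<exists>L. minL S L"
  shows "kernel_sg S = \<Union>{L. minL S L}"
proof -
  define K where "K = \<Union>{L. minL S L}"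
  have contain: "K \<subseteq> J" if J: "two_sided_ideal S J" for J
  proof
    fix x assume "x \<in> K"
    then obtain L where L: "minL S L" "x \<in> L" unfolding K_def by auto
    have LI: "left_ideal S L" using L unfolding minL_def by auto
    obtain j where j: "j \<in> J" using J unfolding two_sided_ideal_def left_ideal_def by auto
    have jS: "j \<in> S" using J j unfolding two_sided_ideal_def left_ideal_def by auto
    have xS: "x \<in> S" using LI L unfolding left_ideal_def by auto
    have "j \<circ> x \<in> J" using J j xS unfolding two_sided_ideal_def right_ideal_def by auto
    moreover have "j \<circ> x \<in> L" using LI jS L(2) unfolding left_ideal_def by auto
    ultimately have e1: "(\<lambda>p. p \<circ> (j \<circ> x)) ` S = L"
      using minL_gen[OF assms(1) L(1)] by auto
    have "(\<lambda>p. p \<circ> (j \<circ> x)) ` S \<subseteq> J"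
      using J \<open>j \<circ> x \<in> J\<close> unfolding two_sided_ideal_def left_ideal_def by auto
    with e1 show "x \<in> J" using L(2) by auto
  qed
  have KT: "two_sided_ideal S K"
    unfolding two_sided_ideal_def left_ideal_def right_ideal_def
  proof (intro conjI ballI)
    show "K \<noteq> {}" using assms(2) unfolding K_def minL_def left_ideal_def by auto
    show "K \<subseteq> S" unfolding K_def minL_def left_ideal_def by auto
    show "K \<noteq> {}" using assms(2) unfolding K_def minL_def left_ideal_def by auto
    show "K \<subseteq> S" unfolding K_def minL_def left_ideal_def by auto
    fix p q assume "p \<in> S" "q \<in> K"
    then obtain L where L: "minL S L" "q \<in> L" unfolding K_def by auto
    have "left_ideal S L" using L(1) unfolding minL_def by auto
    then have "p \<circ> q \<in> L" using \<open>p \<in> S\<close> L(2) unfolding left_ideal_def by auto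
    then show "p \<circ> q \<in> K" using L(1) unfolding K_def by blast
    have "minL S ((\<lambda>l. l \<circ> p) ` L)" by (rule minL_right[OF assms(1) L(1) \<open>p \<in> S\<close>])
    then show "q \<circ> p \<in> K" using L(2) unfolding K_def by blast
  qed
  have "kernel_sg S = K"
    unfolding kernel_sg_def
  proof (rule the_equality)
    show "two_sided_ideal S K \<and> (\<forall>J. two_sided_ideal S J \<and> J \<subseteq> K \<longrightarrow> J = K)"
      using KT contain by blast
    fix K' assume "two_sided_ideal S K' \<and> (\<forall>J. two_sided_ideal S J \<and> J \<subseteq> K' \<longrightarrow> J = K')"
    then show "K' = K" using KT contain by blast
  qed
  then show ?thesis using K_def by simp
qed

lemma minL_exists:
  fixes S :: "('x::metric_space \<Rightarrow> 'x) set"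
  assumes "sg S" "compact S" "S \<noteq> {}"
  shows "\<exists>L. minL S L"
proof -
  define A where "A = {L. left_ideal S L \<and> closed L}"
  have Scl: "closed S" by (rule compact_fun_closed[OF assms(2)])
  have SA: "S \<in> A" using assms Scl unfolding A_def left_ideal_def sg_def by auto
  have "\<exists>M\<in>uminus ` A. \<forall>X\<in>uminus ` A. M \<subseteq> X \<longrightarrow> X = M"
  proof (rule subset_Zorn)
    fix C assume C: "subset.chain (uminus ` A) C"
    define C' where "C' = uminus ` C"
    have CA: "C \<subseteq> uminus ` A" and Ctot: "\<And>X Y. X \<in> C \<Longrightarrow> Y \<in> C \<Longrightarrow> X \<subseteq> Y \<or> Y \<subseteq> X"
      using C unfolding subset_chain_def by blast+
    have C'A: "C' \<subseteq> A"
    proof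
      fix L assume "L \<in> C'"
      then obtain X where X: "X \<in> C" "L = - X" unfolding C'_def by blast
      then obtain L0 where "L0 \<in> A" "X = - L0" using CA by blast
      then show "L \<in> A" using X(2) by simp
    qed
    have C'ch: "subset.chain A C'"
      unfolding subset_chain_def
    proof (intro conjI ballI)
      show "C' \<subseteq> A" by (rule C'A)
      fix L1 L2 assume "L1 \<in> C'" "L2 \<in> C'"
      then obtain X1 X2 where "X1 \<in> C" "L1 = - X1" "X2 \<in> C" "L2 = - X2" unfolding C'_def by blast
      then show "L1 \<subseteq> L2 \<or> L2 \<subseteq> L1" using Ctot[of X1 X2] by (simp add: Compl_subset_Compl_iff disj_commute)
    qed
    define I where "I = S \<inter> \<Inter>C'"
    have memA: "left_ideal S L" "closed L" if "L \<in> C'" for L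
      using subsetD[OF C'A that] unfolding A_def by simp_all
    have Ine: "S \<inter> \<Inter>C' \<noteq> {}"
    proof (rule compact_fip[THEN iffD1, OF assms(2), rule_format])
      show "\<And>a. a \<in> C' \<Longrightarrow> closed a" by (rule memA(2))
      fix B assume B: "B \<subseteq> C'" "finite B"
      show "S \<inter> \<Inter>B \<noteq> {}"
      proof (cases "B = {}")
        case True then show ?thesis using assms(3) by simp
      next
        case False
        have "subset.chain A B"
          unfolding subset_chain_def
        proof (intro conjI ballI)
          show "B \<subseteq> A" using B(1) C'A by (rule subset_trans)
          fix L1 L2 assume "L1 \<in> B" "L2 \<in> B"
          then have "L1 \<in> C'" "L2 \<in> C'" by (simp_all add: subsetD[OF B(1)])
          then show "L1 \<subseteq> L2 \<or> L2 \<subseteq> L1" using C'ch unfolding subset_chain_def by blast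
        qed
        then have "\<Inter>B \<in> B" by (rule Inter_in_chain[OF B(2) False])
        then have "\<Inter>B \<in> C'" by (rule subsetD[OF B(1)])
        then have LIB: "left_ideal S (\<Inter>B)" by (rule memA(1))
        have n1: "\<Inter>B \<noteq> {}" using LIB unfolding left_ideal_def by (elim conjE)
        have n2: "\<Inter>B \<subseteq> S" using LIB unfolding left_ideal_def by (elim conjE)
        have "S \<inter> \<Inter>B = \<Inter>B" using n2 by (rule Int_absorb1)
        then show ?thesis using n1 by simp
      qed
    qed
    have Icl: "closed I" unfolding I_def
      by (rule closed_Int[OF Scl closed_Inter]) (use memA(2) in blast)
    have Imul: "p \<circ> q \<in> I" if p: "p \<in> S" and q: "q \<in> I" for p q
    proof -
      have qS: "q \<in> S" using q unfolding I_def by simp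
      have "p \<circ> q \<in> S" using assms(1) p qS unfolding sg_def by simp
      moreover have "p \<circ> q \<in> L" if L: "L \<in> C'" for L
      proof -
        have "q \<in> L" using q L unfolding I_def by simp
        then show ?thesis using memA(1)[OF L] p unfolding left_ideal_def by simp
      qed
      ultimately show ?thesis unfolding I_def by simp
    qed
    have IA: "I \<in> A" unfolding A_def left_ideal_def
    proof (simp only: mem_Collect_eq, intro conjI ballI)
      show "I \<noteq> {}" using Ine I_def by simp
      show "I \<subseteq> S" unfolding I_def by (rule Int_lower1)
      show "closed I" by (rule Icl)
      fix p q assume "p \<in> S" "q \<in> I" then show "p \<circ> q \<in> I" by (rule Imul)
    qed
    show "\<exists>U\<in>uminus ` A. \<forall>X\<in>C. X \<subseteq> U"
    proof (intro bexI ballI)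
      show "- I \<in> uminus ` A" using IA by auto
      fix X assume "X \<in> C"
      then have "- X \<in> C'" unfolding C'_def by auto
      then have "I \<subseteq> - X" unfolding I_def by auto
      then show "X \<subseteq> - I" by auto
    qed
  qed
  then obtain M' where M'A: "M' \<in> uminus ` A" and Mx0: "\<forall>X\<in>uminus ` A. M' \<subseteq> X \<longrightarrow> X = M'"
    by (rule bexE)
  have Mx: "X = M'" if "X \<in> uminus ` A" "M' \<subseteq> X" for X
  proof -
    have "M' \<subseteq> X \<longrightarrow> X = M'" using Mx0 that(1) by (rule bspec)
    then show ?thesis using that(2) by (rule mp)
  qed
  from M'A obtain M where MA: "M \<in> A" and MM: "M' = - M" by (rule imageE)
  have Mmin: "X = M" if "X \<in> A" "X \<subseteq> M" for X
  proof -
    have "- X \<in> uminus ` A" using that(1) by (rule imageI)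
    moreover have "M' \<subseteq> - X" using that(2) MM by (simp add: Compl_subset_Compl_iff)
    ultimately have "- X = M'" by (rule Mx)
    then show ?thesis using MM by simp
  qed
  have "minL S M"
    unfolding minL_def
  proof (intro conjI allI impI)
    show "left_ideal S M" using MA A_def by auto
    fix L' assume L': "left_ideal S L' \<and> L' \<subseteq> M"
    then obtain x where x: "x \<in> L'" unfolding left_ideal_def by auto
    have xS: "x \<in> S" using L' x unfolding left_ideal_def by auto
    define Sx where "Sx = (\<lambda>p. p \<circ> x) ` S"
    have "compact Sx" unfolding Sx_def
      by (rule compact_continuous_image[OF continuous_on_subset[OF cont_right] assms(2)]) auto
    then have "closed Sx" by (rule compact_fun_closed)
    moreover have "left_ideal S Sx"
      unfolding left_ideal_def Sx_def
    proof (intro conjI ballI)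
      show "(\<lambda>p. p \<circ> x) ` S \<noteq> {}" using assms(3) by auto
      show "(\<lambda>p. p \<circ> x) ` S \<subseteq> S" using assms(1) xS unfolding sg_def by auto
      fix p r assume "p \<in> S" "r \<in> (\<lambda>p. p \<circ> x) ` S"
      then obtain s where "s \<in> S" "r = s \<circ> x" by auto
      then have "p \<circ> r = (p \<circ> s) \<circ> x" by (simp add: o_assoc)
      moreover have "p \<circ> s \<in> S" using assms(1) \<open>p \<in> S\<close> \<open>s \<in> S\<close> unfolding sg_def by auto
      ultimately show "p \<circ> r \<in> (\<lambda>p. p \<circ> x) ` S" by auto
    qed
    moreover have "Sx \<subseteq> L'" using L' x unfolding Sx_def left_ideal_def by auto
    ultimately have "Sx = M" using Mmin L' A_def by auto
    then show "L' = M" using L' \<open>Sx \<subseteq> L'\<close> by auto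
  qed
  then show ?thesis by auto
qed


locale flow =
  fixes \<alpha> :: "'t::linordered_ab_group_add \<Rightarrow> 'x::metric_space \<Rightarrow> 'x"
  assumes cont: "\<And>t. continuous_on UNIV (\<alpha> t)"
    and hom: "\<And>s t. \<alpha> (s + t) = \<alpha> s \<circ> \<alpha> t"
    and zero: "\<alpha> 0 = id"
    and cpt: "compact (UNIV :: 'x set)"
begin

lemma sg_closure:
  assumes T: "\<And>s t. s \<in> T \<Longrightarrow> t \<in> T \<Longrightarrow> s + t \<in> T"
  shows "sg (closure (\<alpha> ` T))"
proof -
  have step1: "\<alpha> s \<circ> q \<in> closure (\<alpha> ` T)" if "s \<in> T" "q \<in> closure (\<alpha> ` T)" for s q
  proof -
    have "(\<lambda>q. \<alpha> s \<circ> q) ` closure (\<alpha> ` T) \<subseteq> closure (\<alpha> ` T)"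
    proof (rule image_closure_subset)
      show "continuous_on (closure (\<alpha> ` T)) ((\<circ>) (\<alpha> s))"
        using cont_left[OF cont] continuous_on_subset by blast
      show "(\<circ>) (\<alpha> s) ` \<alpha> ` T \<subseteq> closure (\<alpha> ` T)"
      proof
        fix f assume "f \<in> (\<circ>) (\<alpha> s) ` \<alpha> ` T"
        then obtain u where u: "u \<in> T" "f = \<alpha> s \<circ> \<alpha> u" by auto
        then have "f = \<alpha> (s + u)" using hom[of s u] by simp
        moreover have "\<alpha> (s + u) \<in> \<alpha> ` T" by (rule imageI[OF T[OF that(1) u(1)]])
        ultimately show "f \<in> closure (\<alpha> ` T)" using closure_subset[of "\<alpha> ` T"] by (simp add: subsetD)
      qed
    qed simp
    then show ?thesis using that by auto
  qed
  show ?thesis unfolding sg_def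
  proof (intro ballI)
    fix p q assume p: "p \<in> closure (\<alpha> ` T)" and q: "q \<in> closure (\<alpha> ` T)"
    have "(\<lambda>p. p \<circ> q) ` closure (\<alpha> ` T) \<subseteq> closure (\<alpha> ` T)"
    proof (rule image_closure_subset)
      show "continuous_on (closure (\<alpha> ` T)) (\<lambda>p. p \<circ> q)"
        using cont_right continuous_on_subset by blast
      show "(\<lambda>p. p \<circ> q) ` \<alpha> ` T \<subseteq> closure (\<alpha> ` T)"
        using step1 q by auto
    qed simp
    then show "p \<circ> q \<in> closure (\<alpha> ` T)" using p by auto
  qed
qed

lemma sgE: "sg (env \<alpha>)"
  unfolding env_def using sg_closure[of UNIV] by simp

lemma sgP: "sg (env_plus \<alpha>)"
  unfolding env_plus_def by (rule sg_closure) auto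

lemma PE: "env_plus \<alpha> \<subseteq> env \<alpha>"
  unfolding env_plus_def env_def by (rule closure_mono) auto

lemma E_split: "env \<alpha> = env_plus \<alpha> \<union> env_minus \<alpha>"
proof -
  have "range \<alpha> = \<alpha> ` {t. 0 \<le> t} \<union> \<alpha> ` {t. t \<le> 0}"
  proof -
    have "UNIV = {t. 0 \<le> t} \<union> {t::'t. t \<le> 0}" by (auto simp: linear)
    then show ?thesis by (metis image_Un)
  qed
  then show ?thesis unfolding env_def env_plus_def env_minus_def by simp
qed

lemma central:
  assumes "p \<in> env \<alpha>"
  shows "\<alpha> t \<circ> p = p \<circ> \<alpha> t"
proof -
  have cl: "closed {p::'x\<Rightarrow>'x. \<alpha> t (p x) = p (\<alpha> t x)}" for x
  proof (rule closed_Collect_eq)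
    show "continuous_on UNIV (\<lambda>p::'x\<Rightarrow>'x. \<alpha> t (p x))"
      by (rule continuous_on_compose2[OF cont continuous_on_product_coordinates]) auto
    show "continuous_on UNIV (\<lambda>p::'x\<Rightarrow>'x. p (\<alpha> t x))" by simp
  qed
  have "closed (\<Inter>x. {p::'x\<Rightarrow>'x. \<alpha> t (p x) = p (\<alpha> t x)})"
    by (rule closed_INT) (use cl in auto)
  moreover have "range \<alpha> \<subseteq> (\<Inter>x. {p::'x\<Rightarrow>'x. \<alpha> t (p x) = p (\<alpha> t x)})"
  proof
    fix f assume "f \<in> range \<alpha>"
    then obtain s where f: "f = \<alpha> s" by auto
    have "\<alpha> t \<circ> \<alpha> s = \<alpha> s \<circ> \<alpha> t" by (metis hom add.commute)
    then show "f \<in> (\<Inter>x. {p::'x\<Rightarrow>'x. \<alpha> t (p x) = p (\<alpha> t x)})"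
      unfolding f by (auto simp: fun_eq_iff)
  qed
  ultimately have "env \<alpha> \<subseteq> (\<Inter>x. {p::'x\<Rightarrow>'x. \<alpha> t (p x) = p (\<alpha> t x)})"
    unfolding env_def by (rule closure_minimal[rotated])
  then show ?thesis using assms by (auto simp: fun_eq_iff)
qed

lemma cptE: "compact (env \<alpha>)"
  unfolding env_def using compact_fun_UNIV[OF cpt]
  by (metis closed_closure compact_Int_closed inf_top.left_neutral)

lemma cptP: "compact (env_plus \<alpha>)"
  unfolding env_plus_def using compact_fun_UNIV[OF cpt]
  by (metis closed_closure compact_Int_closed inf_top.left_neutral)

lemma neP: "env_plus \<alpha> \<noteq> {}"
proof -
  have "\<alpha> 0 \<in> closure (\<alpha> ` {t. 0 \<le> t})" by (rule subsetD[OF closure_subset], rule imageI) simp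
  then show ?thesis unfolding env_plus_def by blast
qed

lemma neE: "env \<alpha> \<noteq> {}"
  using neP PE by auto

lemma existsP: "\<exists>L. minL (env_plus \<alpha>) L"
  by (rule minL_exists[OF sgP cptP neP])

lemma existsE: "\<exists>L. minL (env \<alpha>) L"
  by (rule minL_exists[OF sgE cptE neE])

lemma P_to_E:
  assumes L: "minL (env_plus \<alpha>) L"
  shows "minL (env \<alpha>) L"
proof -
  let ?P = "env_plus \<alpha>" and ?E = "env \<alpha>"
  have LI: "left_ideal ?P L" and mn: "\<And>L'. left_ideal ?P L' \<Longrightarrow> L' \<subseteq> L \<Longrightarrow> L' = L"
    using L unfolding minL_def by auto
  have LP: "L \<subseteq> ?P" using LI unfolding left_ideal_def by auto
  have Einv: "p \<circ> q \<in> L" if q: "q \<in> L" and p: "p \<in> ?E" for p q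
  proof -
    have qP: "q \<in> ?P" using LP q by auto
    have gen: "(\<lambda>p. p \<circ> q) ` ?P = L" by (rule minL_gen[OF sgP L q])
    have at: "\<alpha> t \<circ> q \<in> L" for t
    proof (cases "0 \<le> t")
      case True
      then have "\<alpha> t \<in> ?P" unfolding env_plus_def by (intro subsetD[OF closure_subset] imageI) simp
      then show ?thesis using LI q unfolding left_ideal_def by auto
    next
      case False
      define s where "s = - t"
      have "0 \<le> s" using False s_def by auto
      then have "\<alpha> s \<in> ?P" unfolding env_plus_def by (intro subsetD[OF closure_subset] imageI) simp
      then have sq: "\<alpha> s \<circ> q \<in> L" using LI q unfolding left_ideal_def by auto
      have "(\<lambda>p. p \<circ> (\<alpha> s \<circ> q)) ` ?P = L" by (rule minL_gen[OF sgP L sq])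
      then obtain r where r: "r \<in> ?P" "q = r \<circ> (\<alpha> s \<circ> q)" using q by force
      have "\<alpha> t \<circ> q = \<alpha> t \<circ> r \<circ> \<alpha> s \<circ> q" using r(2) by (metis comp_assoc)
      also have "\<dots> = r \<circ> (\<alpha> t \<circ> \<alpha> s) \<circ> q"
      proof -
        have c: "\<alpha> t \<circ> r = r \<circ> \<alpha> t" using central[of r t] r(1) PE by auto
        show ?thesis by (simp only: c) (simp add: comp_assoc)
      qed
      also have "\<dots> = r \<circ> q" using hom[of t s, symmetric] zero s_def by simp
      finally show ?thesis using LI r(1) q unfolding left_ideal_def by auto
    qed
    have "compact L" unfolding gen[symmetric]
      by (rule compact_continuous_image[OF continuous_on_subset[OF cont_right] cptP]) auto
    then have "closed L" by (rule compact_fun_closed)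
    have "(\<lambda>p. p \<circ> q) ` closure (range \<alpha>) \<subseteq> L"
    proof (rule image_closure_subset)
      show "continuous_on (closure (range \<alpha>)) (\<lambda>p. p \<circ> q)"
        using cont_right continuous_on_subset by blast
      show "(\<lambda>p. p \<circ> q) ` range \<alpha> \<subseteq> L" using at by auto
    qed fact
    then show ?thesis using p unfolding env_def by auto
  qed
  have LIE: "left_ideal ?E L"
    using LI LP PE Einv unfolding left_ideal_def by auto
  have "L' = L" if "left_ideal ?E L'" "L' \<subseteq> L" for L'
  proof -
    have "left_ideal ?P L'" using that LP PE unfolding left_ideal_def by blast
    then show ?thesis using mn that(2) by auto
  qed
  then show ?thesis using LIE unfolding minL_def by auto
qed

lemma E_to_P:
  assumes L: "minL (env \<alpha>) L" and q: "q \<in> L" "q \<in> env_plus \<alpha>"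
  shows "minL (env_plus \<alpha>) L"
proof -
  obtain L0 where L0: "minL (env_plus \<alpha>) L0" using existsP by auto
  have L0E: "minL (env \<alpha>) L0" by (rule P_to_E[OF L0])
  have L1: "minL (env_plus \<alpha>) ((\<lambda>l. l \<circ> q) ` L0)" by (rule minL_right[OF sgP L0 q(2)])
  have L1E: "minL (env \<alpha>) ((\<lambda>l. l \<circ> q) ` L0)" by (rule P_to_E[OF L1])
  have "(\<lambda>l. l \<circ> q) ` L0 \<subseteq> L"
    using L0E L q(1) unfolding minL_def left_ideal_def by blast
  then have "(\<lambda>l. l \<circ> q) ` L0 = L" using L1E L unfolding minL_def by blast
  then show ?thesis using L1 by simp
qed

end

lemma flow_minus:
  assumes "flow \<alpha>"
  shows "flow (\<lambda>t. \<alpha> (- t))"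
proof -
  interpret flow \<alpha> by fact
  show ?thesis
  proof
    fix s t
    show "\<alpha> (- (s + t)) = \<alpha> (- s) \<circ> \<alpha> (- t)"
    proof -
      have "- (s + t) = - s + - t" by simp
      then show ?thesis using hom[of "- s" "- t"] by (simp only:)
    qed
  qed (simp_all add: cont zero cpt)
qed

lemma env_minus_eq: "env (\<lambda>t. \<alpha> (- (t::'t::ab_group_add))) = env \<alpha>"
proof -
  have u: "uminus ` (UNIV :: 't set) = UNIV"
    by (rule surjI[where f = uminus]) simp
  have "range (\<lambda>t. \<alpha> (- t)) = \<alpha> ` (uminus ` (UNIV :: 't set))"
    by (simp only: image_comp o_def)
  then have "range (\<lambda>t. \<alpha> (- t)) = range \<alpha>" by (simp only: u)
  then show ?thesis unfolding env_def by simp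
qed

lemma env_plus_minus_eq:
  "env_plus (\<lambda>t. \<alpha> (- (t::'t::linordered_ab_group_add))) = env_minus \<alpha>"
proof -
  have "(\<lambda>t. \<alpha> (- t)) ` {t. 0 \<le> t} = \<alpha> ` {t. t \<le> 0}"
  proof -
    have u: "uminus ` {t::'t. 0 \<le> t} = {t. t \<le> 0}"
    proof (rule set_eqI, rule iffI)
      fix x assume "x \<in> uminus ` {t::'t. 0 \<le> t}"
      then obtain t where "0 \<le> t" "x = - t" by (rule imageE) simp
      then show "x \<in> {t. t \<le> 0}" by simp
    next
      fix x :: 't assume "x \<in> {t. t \<le> 0}"
      then have "- x \<in> {t. 0 \<le> t}" by simp
      then show "x \<in> uminus ` {t::'t. 0 \<le> t}" by (rule image_eqI[rotated]) simp
    qed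
    have "(\<lambda>t. \<alpha> (- t)) ` {t. 0 \<le> t} = \<alpha> ` (uminus ` {t::'t. 0 \<le> t})"
      by (simp only: image_comp o_def)
    then show ?thesis by (simp only: u)
  qed
  then show ?thesis unfolding env_plus_def env_minus_def by simp
qed

lemma flow_main:
  assumes "flow (\<alpha> :: 't::linordered_ab_group_add \<Rightarrow> 'x::metric_space \<Rightarrow> 'x)"
  shows "kernel_sg (env \<alpha>) = kernel_sg (env_plus \<alpha>) \<union> kernel_sg (env_minus \<alpha>) \<and>
            left_ideal (env \<alpha>) (kernel_sg (env_plus \<alpha>)) \<and>
            left_ideal (env \<alpha>) (kernel_sg (env_minus \<alpha>))"
proof -
  interpret a: flow \<alpha> by fact
  interpret b: flow "\<lambda>t. \<alpha> (- t)" by (rule flow_minus[OF assms])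
  have bE: "env (\<lambda>t. \<alpha> (- t)) = env \<alpha>" by (rule env_minus_eq)
  have bP: "env_plus (\<lambda>t. \<alpha> (- t)) = env_minus \<alpha>" by (rule env_plus_minus_eq)
  have kE: "kernel_sg (env \<alpha>) = \<Union>{L. minL (env \<alpha>) L}"
    by (rule kernel_eq[OF a.sgE a.existsE])
  have kP: "kernel_sg (env_plus \<alpha>) = \<Union>{L. minL (env_plus \<alpha>) L}"
    by (rule kernel_eq[OF a.sgP a.existsP])
  have kM: "kernel_sg (env_minus \<alpha>) = \<Union>{L. minL (env_minus \<alpha>) L}"
    using kernel_eq[OF b.sgP b.existsP] bP by simp
  have PE: "minL (env \<alpha>) L" if "minL (env_plus \<alpha>) L" for L using a.P_to_E that .
  have ME: "minL (env \<alpha>) L" if "minL (env_minus \<alpha>) L" for L using b.P_to_E[of L] that bE bP by simp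
  have EP: "minL (env_plus \<alpha>) L" if "minL (env \<alpha>) L" "q \<in> L" "q \<in> env_plus \<alpha>" for L q
    using a.E_to_P that .
  have EM: "minL (env_minus \<alpha>) L" if "minL (env \<alpha>) L" "q \<in> L" "q \<in> env_minus \<alpha>" for L q
    using b.E_to_P[of L q] that bE bP by simp
  have eq: "kernel_sg (env \<alpha>) = kernel_sg (env_plus \<alpha>) \<union> kernel_sg (env_minus \<alpha>)"
  proof
    show "kernel_sg (env \<alpha>) \<subseteq> kernel_sg (env_plus \<alpha>) \<union> kernel_sg (env_minus \<alpha>)"
    proof
      fix q assume "q \<in> kernel_sg (env \<alpha>)"
      then obtain L where L: "minL (env \<alpha>) L" "q \<in> L" using kE by auto
      then have "q \<in> env \<alpha>" unfolding minL_def left_ideal_def by auto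
      then have "q \<in> env_plus \<alpha> \<or> q \<in> env_minus \<alpha>" using a.E_split by auto
      then show "q \<in> kernel_sg (env_plus \<alpha>) \<union> kernel_sg (env_minus \<alpha>)"
        using EP[OF L] EM[OF L] L(2) kP kM by auto
    qed
    show "kernel_sg (env_plus \<alpha>) \<union> kernel_sg (env_minus \<alpha>) \<subseteq> kernel_sg (env \<alpha>)"
      using PE ME kE kP kM by auto
  qed
  have li: "left_ideal (env \<alpha>) (\<Union>{L. minL S L})"
    if ex: "\<exists>L. minL S L" and conv: "\<And>L. minL S L \<Longrightarrow> minL (env \<alpha>) L" for S
  proof -
    have LE: "left_ideal (env \<alpha>) L" if "minL S L" for L
      using conv[OF that] unfolding minL_def by (elim conjE)
    obtain L0 where L0: "minL S L0" using ex by (elim exE)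
    have "L0 \<noteq> {}" using LE[OF L0] unfolding left_ideal_def by (elim conjE)
    then have ne: "\<Union>{L. minL S L} \<noteq> {}" using L0 by blast
    have sub: "\<Union>{L. minL S L} \<subseteq> env \<alpha>"
    proof
      fix x assume "x \<in> \<Union>{L. minL S L}"
      then obtain L where L: "minL S L" "x \<in> L" by blast
      have "L \<subseteq> env \<alpha>" using LE[OF L(1)] unfolding left_ideal_def by (elim conjE)
      then show "x \<in> env \<alpha>" using L(2) by (rule subsetD)
    qed
    have mul: "p \<circ> q \<in> \<Union>{L. minL S L}" if pq: "p \<in> env \<alpha>" "q \<in> \<Union>{L. minL S L}" for p q
    proof -
      obtain L where L: "minL S L" "q \<in> L" using pq(2) by blast
      have "\<forall>p\<in>env \<alpha>. \<forall>q\<in>L. p \<circ> q \<in> L" using LE[OF L(1)] unfolding left_ideal_def by (elim conjE)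
      then have "p \<circ> q \<in> L" using pq(1) L(2) by simp
      then show ?thesis using L(1) by blast
    qed
    show ?thesis unfolding left_ideal_def using ne sub mul by simp
  qed
  have exM: "\<exists>L. minL (env_minus \<alpha>) L" using b.existsP bP by simp
  show ?thesis using eq li[OF a.existsP PE] li[OF exM ME] kP kM by simp
qed

lemma dyn_flow:
  assumes "dyn_system (\<alpha> :: 't::{linordered_ab_group_add, topological_space} \<Rightarrow> 'x::metric_space \<Rightarrow> 'x)"
    and "compact (UNIV :: 'x set)"
  shows "flow \<alpha>"
proof
  fix t
  obtain g where "homeomorphism UNIV UNIV (\<alpha> t) g" using assms unfolding dyn_system_def by blast
  then show "continuous_on UNIV (\<alpha> t)" unfolding homeomorphism_def by auto
next
  fix s t show "\<alpha> (s + t) = \<alpha> s \<circ> \<alpha> t" using assms(1) unfolding dyn_system_def by (elim conjE) simp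
next
  show "\<alpha> 0 = id" using assms(1) unfolding dyn_system_def by (elim conjE)
next
  show "compact (UNIV :: 'x set)" by (rule assms(2))
qed

theorem corollary3p8:
  fixes X_type :: "'x::metric_space itself"
  assumes "compact (UNIV :: 'x set)"
  shows "(\<forall>\<alpha> :: int \<Rightarrow> 'x \<Rightarrow> 'x. dyn_system \<alpha> \<longrightarrow>
            kernel_sg (env \<alpha>) = kernel_sg (env_plus \<alpha>) \<union> kernel_sg (env_minus \<alpha>) \<and>
            left_ideal (env \<alpha>) (kernel_sg (env_plus \<alpha>)) \<and>
            left_ideal (env \<alpha>) (kernel_sg (env_minus \<alpha>)))
       \<and> (\<forall>\<alpha> :: real \<Rightarrow> 'x \<Rightarrow> 'x. dyn_system \<alpha> \<longrightarrow>
            kernel_sg (env \<alpha>) = kernel_sg (env_plus \<alpha>) \<union> kernel_sg (env_minus \<alpha>) \<and>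
            left_ideal (env \<alpha>) (kernel_sg (env_plus \<alpha>)) \<and>
            left_ideal (env \<alpha>) (kernel_sg (env_minus \<alpha>)))"
proof (intro conjI allI impI)
  fix \<alpha> :: "int \<Rightarrow> 'x \<Rightarrow> 'x"
  assume D: "dyn_system \<alpha>"
  have H: "kernel_sg (env \<alpha>) = kernel_sg (env_plus \<alpha>) \<union> kernel_sg (env_minus \<alpha>) \<and>
            left_ideal (env \<alpha>) (kernel_sg (env_plus \<alpha>)) \<and>
            left_ideal (env \<alpha>) (kernel_sg (env_minus \<alpha>))"
    by (rule flow_main[OF dyn_flow[OF D assms]])
  show "kernel_sg (env \<alpha>) = kernel_sg (env_plus \<alpha>) \<union> kernel_sg (env_minus \<alpha>)"
    using H by (rule conjunct1)
  show "left_ideal (env \<alpha>) (kernel_sg (env_plus \<alpha>))"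
    using conjunct2[OF H] by (rule conjunct1)
  show "left_ideal (env \<alpha>) (kernel_sg (env_minus \<alpha>))"
    using conjunct2[OF H] by (rule conjunct2)
next
  fix \<alpha> :: "real \<Rightarrow> 'x \<Rightarrow> 'x"
  assume D: "dyn_system \<alpha>"
  have H: "kernel_sg (env \<alpha>) = kernel_sg (env_plus \<alpha>) \<union> kernel_sg (env_minus \<alpha>) \<and>
            left_ideal (env \<alpha>) (kernel_sg (env_plus \<alpha>)) \<and>
            left_ideal (env \<alpha>) (kernel_sg (env_minus \<alpha>))"
    by (rule flow_main[OF dyn_flow[OF D assms]])
  show "kernel_sg (env \<alpha>) = kernel_sg (env_plus \<alpha>) \<union> kernel_sg (env_minus \<alpha>)"
    using H by (rule conjunct1)
  show "left_ideal (env \<alpha>) (kernel_sg (env_plus \<alpha>))"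
    using conjunct2[OF H] by (rule conjunct1)
  show "left_ideal (env \<alpha>) (kernel_sg (env_minus \<alpha>))"
    using conjunct2[OF H] by (rule conjunct2)
qed

end
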